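(* Consider Algorithm 1 with $x_0=0$, run on arbitrary vectors $g_t$ and non-negative learning rates $\eta_t$. For any $t\ge1$ and any $x^*\in\mathbb{R}^d$ there exists a number $\tilde x_t$ between $\|x^*\|$ and $\|x_t\|$ such that $$\frac{\|x^*-x_t\|^2}{S_{t-1}+2}\min\Big\{1,\frac1{\tilde x_t}\Big\}\le B_{\phi_t}(x^*,x_t)\le2\|x^*-x_t\|^2(S_{t-1}^2+Q_{t-1})\exp(Q_{t-1}),$$ with the convention $\min\{1,1/0\}=1$.
   Context: $\|\cdot\|$ is the Euclidean norm. For differentiable $f$, $B_f(x,y)=f(x)-f(y)-\langle\nabla f(y),x-y\rangle$. Auxiliary functions: $\psi^*(\theta,S,Q)=\exp\big(\max_{\beta\in[-1/2,1/2]}(\theta\beta-\beta^2S^2)-Q\big)$ for $\theta\in\mathbb{R},S>0,Q\ge0$; $\psi(x,S,Q)=\sup_{\theta\in\mathbb{R}}(\theta x-\psi^*(\theta,S,Q))$. Algorithm 1 with $x_0=0$: $S_0^2=4$, $Q_0=0$, $\theta_0=0$. For $t=1,2,\dots$: $\phi_t(x)=\psi(\|x\|,S_{t-1},Q_{t-1})$; $x_t$ is the unique minimizer of $\phi_t(x)-\langle\theta_{t-1},x\rangle$; receive $g_t$; $\ell_t=\eta_tg_t$, $S_t^2=S_{t-1}^2+\|\ell_t\|^2$ ($S_t>0$), $Q_t=Q_{t-1}+\|\ell_t\|^2/S_t^2$, $\theta_t=\theta_{t-1}-\ell_t$. *)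

theory Defs
  imports "HOL-Analysis.Analysis"
begin

definition bregman :: "('a::real_normed_vector \<Rightarrow> real) \<Rightarrow> 'a \<Rightarrow> 'a \<Rightarrow> real" where
  "bregman f x y = f x - f y - frechet_derivative f (at y) (x - y)"

definition psi_star :: "real \<Rightarrow> real \<Rightarrow> real \<Rightarrow> real" where
  "psi_star \<theta> S Q = exp (Sup ((\<lambda>\<beta>. \<theta> * \<beta> - \<beta>\<^sup>2 * S\<^sup>2) ` {-1/2..1/2}) - Q)"

definition psi :: "real \<Rightarrow> real \<Rightarrow> real \<Rightarrow> real" where
  "psi x S Q = Sup (range (\<lambda>\<theta>. \<theta> * x - psi_star \<theta> S Q))"

text \<open>Algorithm 1 state, driven by learning rates eta and vectors g (indices t = 1,2,...;
  the values eta 0, g 0 are never used). ell_t = eta_t g_t.\<close>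
fun alg_Ssq :: "(nat \<Rightarrow> real) \<Rightarrow> (nat \<Rightarrow> 'a::euclidean_space) \<Rightarrow> nat \<Rightarrow> real" where
  "alg_Ssq \<eta> g 0 = 4"
| "alg_Ssq \<eta> g (Suc t) = alg_Ssq \<eta> g t + (norm (\<eta> (Suc t) *\<^sub>R g (Suc t)))\<^sup>2"

definition alg_S :: "(nat \<Rightarrow> real) \<Rightarrow> (nat \<Rightarrow> 'a::euclidean_space) \<Rightarrow> nat \<Rightarrow> real" where
  "alg_S \<eta> g t = sqrt (alg_Ssq \<eta> g t)"

fun alg_Q :: "(nat \<Rightarrow> real) \<Rightarrow> (nat \<Rightarrow> 'a::euclidean_space) \<Rightarrow> nat \<Rightarrow> real" where
  "alg_Q \<eta> g 0 = 0"
| "alg_Q \<eta> g (Suc t) = alg_Q \<eta> g t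
     + (norm (\<eta> (Suc t) *\<^sub>R g (Suc t)))\<^sup>2 / alg_Ssq \<eta> g (Suc t)"

fun alg_theta :: "(nat \<Rightarrow> real) \<Rightarrow> (nat \<Rightarrow> 'a::euclidean_space) \<Rightarrow> nat \<Rightarrow> 'a" where
  "alg_theta \<eta> g 0 = 0"
| "alg_theta \<eta> g (Suc t) = alg_theta \<eta> g t - \<eta> (Suc t) *\<^sub>R g (Suc t)"

definition alg_phi :: "(nat \<Rightarrow> real) \<Rightarrow> (nat \<Rightarrow> 'a::euclidean_space) \<Rightarrow> nat \<Rightarrow> 'a \<Rightarrow> real" where
  "alg_phi \<eta> g t x = psi (norm x) (alg_S \<eta> g (t - 1)) (alg_Q \<eta> g (t - 1))"

definition alg_x :: "(nat \<Rightarrow> real) \<Rightarrow> (nat \<Rightarrow> 'a::euclidean_space) \<Rightarrow> nat \<Rightarrow> 'a" where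
  "alg_x \<eta> g t = (if t = 0 then 0 else
     (THE x. \<forall>y. alg_phi \<eta> g t x - inner (alg_theta \<eta> g (t - 1)) x
                 \<le> alg_phi \<eta> g t y - inner (alg_theta \<eta> g (t - 1)) y))"

definition min_one_inv :: "real \<Rightarrow> real" where
  "min_one_inv r = (if r = 0 then 1 else min 1 (1 / r))"

end

theory Submission
  imports Defs
begin

lemma deriv_sandwich:
  fixes f g :: "real \<Rightarrow> real"
  assumes lo: "\<And>y. (y - x) * g x \<le> f y - f x"
    and up: "\<And>y. f y - f x \<le> (y - x) * g y"
    and c: "isCont g x"
  shows "(f has_real_derivative g x) (at x)"
proof -
  have q: "min (g x) (g y) \<le> (f y - f x)/(y - x) \<and> (f y - f x)/(y-x) \<le> max (g x) (g y)"
    if "y \<noteq> x" for y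
  proof (cases "y > x")
    case True
    then have "g x \<le> (f y - f x)/(y - x)" "(f y - f x)/(y - x) \<le> g y"
      using lo[of y] up[of y] by (auto simp: field_simps)
    then show ?thesis by auto
  next
    case False
    then have yx: "y < x" using that by auto
    then have "(f y - f x)/(y - x) \<le> g x" "g y \<le> (f y - f x)/(y - x)"
      using lo[of y] up[of y] by (auto simp: field_simps)
    then show ?thesis by auto
  qed
  have gt: "(g \<longlongrightarrow> g x) (at x)" using c isCont_def by blast
  have l1: "((\<lambda>y. min (g x) (g y)) \<longlongrightarrow> g x) (at x)"
    using tendsto_min[OF tendsto_const[of "g x"] gt] by simp
  have l2: "((\<lambda>y. max (g x) (g y)) \<longlongrightarrow> g x) (at x)"
    using tendsto_max[OF tendsto_const[of "g x"] gt] by simp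
  have ev1: "\<forall>\<^sub>F y in at x. min (g x) (g y) \<le> (f y - f x)/(y - x)"
    using q by (auto simp: eventually_at_filter)
  have ev2: "\<forall>\<^sub>F y in at x. (f y - f x)/(y - x) \<le> max (g x) (g y)"
    using q by (auto simp: eventually_at_filter)
  have "((\<lambda>y. (f y - f x)/(y - x)) \<longlongrightarrow> g x) (at x)"
    by (rule tendsto_sandwich[OF ev1 ev2 l1 l2])
  then show ?thesis by (simp add: has_field_derivative_iff)
qed

lemma mvt_tangent:
  fixes K K' :: "real \<Rightarrow> real"
  assumes der: "\<And>x. (K has_real_derivative K' x) (at x)"
    and mono: "\<And>x y. min u v \<le> x \<Longrightarrow> x \<le> y \<Longrightarrow> y \<le> max u v \<Longrightarrow> K' x \<le> K' y"
  shows "K' v * (u - v) \<le> K u - K v"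
proof (cases u v rule: linorder_cases)
  case less
  obtain z where z: "u < z" "z < v" "K v - K u = (v - u) * K' z"
    using MVT2[OF less der] by blast
  have "K' z \<le> K' v" using mono[of z v] z less by auto
  then have "(v - u) * K' z \<le> (v - u) * K' v" using less by (intro mult_left_mono) auto
  then show ?thesis using z by (simp add: algebra_simps)
next
  case equal then show ?thesis by simp
next
  case greater
  obtain z where z: "v < z" "z < u" "K u - K v = (u - v) * K' z"
    using MVT2[OF greater der] by blast
  have "K' v \<le> K' z" using mono[of v z] z greater by auto
  then have "(u - v) * K' v \<le> (u - v) * K' z" using greater by (intro mult_left_mono) auto
  then show ?thesis using z by (simp add: algebra_simps)
qed

locale PQ =
  fixes S Q :: real
  assumes S2: "2 \<le> S" and Q0: "0 \<le> Q"
begin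

definition b0 :: "real \<Rightarrow> real" where
  "b0 t = max (-1/2) (min (1/2) (t / (2 * S\<^sup>2)))"
definition hh :: "real \<Rightarrow> real" where
  "hh t = t * b0 t - (b0 t)\<^sup>2 * S\<^sup>2"
definition Fd :: "real \<Rightarrow> real" where
  "Fd t = exp (hh t - Q) * b0 t"
definition F :: "real \<Rightarrow> real" where
  "F t = psi_star t S Q"
definition mu :: real where "mu = exp (- Q) / (2 * S\<^sup>2)"

lemma SS: "4 \<le> S\<^sup>2" "0 < S"
proof -
  show "4 \<le> S\<^sup>2" using mult_mono[of 2 S 2 S] S2 by (simp add: power2_eq_square)
  show "0 < S" using S2 by simp
qed

lemma mu_pos: "0 < mu" using SS by (simp add: mu_def)

lemma hh_ge: assumes "-1/2 \<le> \<beta>" "\<beta> \<le> 1/2" shows "t * \<beta> - \<beta>\<^sup>2 * S\<^sup>2 \<le> hh t"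
proof -
  have S: "S\<^sup>2 > 0" using SS by simp
  have key: "0 \<le> S\<^sup>2 * ((\<beta> - b0 t) * (\<beta> + b0 t - t / S\<^sup>2))"
  proof (cases "t / (2 * S\<^sup>2) > 1/2")
    case True
    then have "b0 t = 1/2" by (simp add: b0_def)
    moreover have "t / S\<^sup>2 > 1" using True S by (simp add: field_simps)
    ultimately have "\<beta> - b0 t \<le> 0" "\<beta> + b0 t - t / S\<^sup>2 \<le> 0" using assms by auto
    then show ?thesis using S by (simp add: mult_nonpos_nonpos)
  next
    case F1: False
    show ?thesis
    proof (cases "t / (2 * S\<^sup>2) < -1/2")
      case True
      then have "b0 t = -1/2" by (simp add: b0_def)
      moreover have "t / S\<^sup>2 < -1" using True S by (simp add: field_simps)
      ultimately have "\<beta> - b0 t \<ge> 0" "\<beta> + b0 t - t / S\<^sup>2 \<ge> 0" using assms by auto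
      then show ?thesis using S by simp
    next
      case False
      then have "b0 t = t / (2 * S\<^sup>2)" using F1 by (simp add: b0_def)
      then have "(\<beta> - b0 t) * (\<beta> + b0 t - t / S\<^sup>2) = (\<beta> - b0 t)^2"
        by (simp add: power2_eq_square field_simps)
      then show ?thesis using S by simp
    qed
  qed
  have "hh t - (t * \<beta> - \<beta>\<^sup>2 * S\<^sup>2) = S\<^sup>2 * ((\<beta> - b0 t) * (\<beta> + b0 t - t / S\<^sup>2))"
    using SS(2) by (simp add: hh_def power2_eq_square field_simps)
  then show ?thesis using key by linarith
qed

lemma b0_range: "-1/2 \<le> b0 t" "b0 t \<le> 1/2" by (auto simp: b0_def)

lemma F_eq: "F t = exp (hh t - Q)"
proof -
  have "Sup ((\<lambda>\<beta>. t * \<beta> - \<beta>\<^sup>2 * S\<^sup>2) ` {-1/2..1/2}) = hh t"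
    apply (rule cSup_eq_maximum)
    using hh_ge b0_range SS(2) by (auto simp: hh_def image_iff intro!: bexI[of _ "b0 t"])
  then show ?thesis by (simp add: F_def psi_star_def)
qed

lemma b0_cont: "isCont b0 x" unfolding b0_def using SS(2) by (intro continuous_intros) auto

lemma hh_deriv: "(hh has_real_derivative b0 x) (at x)"
proof (rule deriv_sandwich[OF _ _ b0_cont])
  fix y
  show "(y - x) * b0 x \<le> hh y - hh x"
    using hh_ge[OF b0_range, of y x] by (simp add: hh_def algebra_simps)
  show "hh y - hh x \<le> (y - x) * b0 y"
    using hh_ge[OF b0_range, of x y] by (simp add: hh_def algebra_simps)
qed

lemma F_deriv: "(F has_real_derivative Fd x) (at x)"
  unfolding F_eq[abs_def] Fd_def
  by (rule derivative_eq_intros hh_deriv | simp)+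

lemma b0_odd: "b0 (-t) = - b0 t" by (auto simp: b0_def)
lemma hh_even: "hh (-t) = hh t" by (simp add: hh_def b0_odd)
lemma Fd_odd: "Fd (-t) = - Fd t" by (simp add: Fd_def b0_odd hh_even)
lemma Fd_cont: "isCont Fd x"
  unfolding Fd_def using DERIV_isCont[OF hh_deriv] b0_cont by (intro continuous_intros) auto

lemma hh_up: "hh y - hh x \<le> (y - x) * b0 y"
  using hh_ge[OF b0_range, of x y] by (simp add: hh_def algebra_simps)
lemma hh_lo: "(y - x) * b0 x \<le> hh y - hh x"
  using hh_ge[OF b0_range, of y x] by (simp add: hh_def algebra_simps)

lemma b0_nonneg: "0 \<le> t \<Longrightarrow> 0 \<le> b0 t"
proof -
  assume "0 \<le> t"
  then have "0 \<le> t / (2 * S\<^sup>2)" by simp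
  then show ?thesis by (simp add: b0_def)
qed
lemma b0_mono: "x \<le> y \<Longrightarrow> b0 x \<le> b0 y"
proof -
  assume "x \<le> y"
  then have "x / (2 * S\<^sup>2) \<le> y / (2 * S\<^sup>2)" by (simp add: divide_right_mono)
  then show ?thesis by (simp add: b0_def max_def min_def)
qed
lemma b0_lip: "x \<le> y \<Longrightarrow> b0 y - b0 x \<le> (y - x) / (2 * S\<^sup>2)"
  using SS unfolding b0_def by (auto simp: field_simps max_def min_def)

lemma hh_nonneg: "0 \<le> hh t" using hh_ge[of 0 t] by simp
lemma hh_mono: "0 \<le> x \<Longrightarrow> x \<le> y \<Longrightarrow> hh x \<le> hh y"
  using hh_lo[of y x] b0_nonneg[of x] by (smt (verit) mult_nonneg_nonneg)

lemma Fd_nonneg: "0 \<le> t \<Longrightarrow> 0 \<le> Fd t" by (simp add: Fd_def b0_nonneg)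
lemma Fd_zero: "Fd 0 = 0" by (simp add: Fd_def b0_def)

lemma Fd_lip:
  assumes "0 \<le> x" "x \<le> y"
  shows "Fd y - Fd x \<le> 2 * max 1 (Fd y) * (y - x)"
proof -
  define e1 e2 where "e1 = exp (hh x - Q)" and "e2 = exp (hh y - Q)"
  have e1e2: "e2 - e1 \<le> e2 * (hh y - hh x)"
  proof -
    have "1 + (hh x - hh y) \<le> exp (hh x - hh y)" by (rule exp_ge_add_one_self)
    then have "e2 * (1 + (hh x - hh y)) \<le> e2 * exp (hh x - hh y)"
      by (simp add: e2_def)
    also have "e2 * exp (hh x - hh y) = e1" by (simp add: e1_def e2_def flip: exp_add)
    finally show ?thesis by (simp add: algebra_simps)
  qed
  have b1: "0 \<le> b0 x" "b0 x \<le> 1/2" using b0_nonneg assms b0_range by auto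
  have b2: "0 \<le> b0 y" using b0_nonneg assms by auto
  have e2p: "0 < e2" by (simp add: e2_def)
  have "Fd y - Fd x = e2 * (b0 y - b0 x) + b0 x * (e2 - e1)"
    by (simp add: Fd_def e1_def e2_def algebra_simps)
  also have "\<dots> \<le> e2 * ((y - x) / (2 * S\<^sup>2)) + b0 x * (e2 * ((y - x) * b0 y))"
  proof (rule add_mono)
    show "e2 * (b0 y - b0 x) \<le> e2 * ((y - x) / (2 * S\<^sup>2))"
      using mult_left_mono[OF b0_lip[OF assms(2)], of e2] e2p by simp
    have "e2 - e1 \<le> e2 * ((y - x) * b0 y)"
      using e1e2 hh_up[of y x] e2p by (smt (verit) mult_left_mono)
    then show "b0 x * (e2 - e1) \<le> b0 x * (e2 * ((y - x) * b0 y))"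
      using b1 by (simp add: mult_left_mono)
  qed
  also have "\<dots> \<le> (y - x) * (max 1 (Fd y) + Fd y / 2)"
  proof -
    have A: "e2 / (2 * S\<^sup>2) \<le> max 1 (Fd y)"
    proof (cases "y \<ge> 1")
      case True
      have "1 / (2 * S\<^sup>2) \<le> b0 y"
        using True SS unfolding b0_def by (auto simp: field_simps max_def min_def)
      then have "e2 * (1 / (2 * S\<^sup>2)) \<le> e2 * b0 y" using e2p by (intro mult_left_mono) auto
      then show ?thesis by (simp add: Fd_def e2_def)
    next
      case False
      have "hh y \<le> y * b0 y" by (simp add: hh_def)
      also have "\<dots> \<le> 1 * (1/2)" using False assms b2 b0_range[of y]
        by (intro mult_mono) auto
      finally have "hh y - Q \<le> 1" using Q0 by simp
      then have "e2 \<le> exp 1" unfolding e2_def by simp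
      also have "\<dots> \<le> 3" by (rule exp_le)
      finally have "e2 \<le> 2 * S\<^sup>2" using SS by simp
      then have "e2 / (2 * S\<^sup>2) \<le> 1" using SS by (simp add: field_simps)
      then show ?thesis by linarith
    qed
    have B: "b0 x * (e2 * b0 y) \<le> Fd y / 2"
    proof -
      have "b0 x * b0 y \<le> (1/2) * b0 y" using b1 b2 by (intro mult_right_mono) auto
      then have "e2 * (b0 x * b0 y) \<le> e2 * ((1/2) * b0 y)" using e2p by (intro mult_left_mono) auto
      then show ?thesis by (simp add: Fd_def e2_def algebra_simps)
    qed
    have "e2 * ((y - x) / (2 * S\<^sup>2)) + b0 x * (e2 * ((y - x) * b0 y))
        = (y - x) * (e2 / (2 * S\<^sup>2)) + (y - x) * (b0 x * (e2 * b0 y))"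
      by (simp add: algebra_simps)
    also have "\<dots> \<le> (y - x) * max 1 (Fd y) + (y - x) * (Fd y / 2)"
      using A B assms by (intro add_mono mult_left_mono) auto
    finally show ?thesis by (simp add: algebra_simps)
  qed
  also have "\<dots> \<le> (y - x) * (2 * max 1 (Fd y))"
    using assms Fd_nonneg[of y] by (intro mult_left_mono) auto
  finally show ?thesis by (simp add: algebra_simps)
qed

lemma b0_quad: "0 \<le> t \<Longrightarrow> t \<le> S\<^sup>2 \<Longrightarrow> b0 t = t / (2 * S\<^sup>2)"
  using SS by (auto simp: b0_def field_simps)
lemma b0_lin: "S\<^sup>2 \<le> t \<Longrightarrow> b0 t = 1/2"
  using SS by (auto simp: b0_def field_simps)

lemma Fd_smono_a:
  assumes "0 \<le> x" "x \<le> y" "y \<le> S\<^sup>2"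
  shows "mu * (y - x) \<le> Fd y - Fd x"
proof -
  define e1 e2 where "e1 = exp (hh x - Q)" and "e2 = exp (hh y - Q)"
  have "e1 \<le> e2" using hh_mono[OF assms(1,2)] by (simp add: e1_def e2_def)
  have e2: "exp (- Q) \<le> e2" using hh_nonneg[of y] by (simp add: e2_def)
  have bx: "b0 x = x / (2 * S\<^sup>2)" "b0 y = y / (2 * S\<^sup>2)"
    using b0_quad assms by auto
  have "Fd y - Fd x = e2 * ((y - x) / (2 * S\<^sup>2)) + b0 x * (e2 - e1)"
    by (simp add: Fd_def e1_def e2_def bx algebra_simps diff_divide_distrib)
  moreover have "0 \<le> b0 x * (e2 - e1)" using b0_nonneg assms \<open>e1 \<le> e2\<close> by simp
  moreover have "exp (- Q) * ((y - x) / (2 * S\<^sup>2)) \<le> e2 * ((y - x) / (2 * S\<^sup>2))"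
    using e2 assms by (intro mult_right_mono) auto
  ultimately show ?thesis by (simp add: mu_def)
qed

lemma Fd_smono_b:
  assumes "S\<^sup>2 \<le> x" "x \<le> y"
  shows "mu * (y - x) \<le> Fd y - Fd x"
proof -
  define e1 where "e1 = exp (hh x - Q)"
  have hx: "hh x = x / 2 - S\<^sup>2 / 4" "hh y = y / 2 - S\<^sup>2 / 4"
  proof -
    have bx: "b0 x = 1/2" "b0 y = 1/2" using b0_lin assms by auto
    show "hh x = x / 2 - S\<^sup>2 / 4" "hh y = y / 2 - S\<^sup>2 / 4" unfolding hh_def bx by (auto simp: power2_eq_square)
  qed
  have e2: "exp (hh y - Q) = e1 * exp ((y - x) / 2)"
    by (simp add: e1_def hx flip: exp_add) (simp add: field_simps)
  have "Fd y - Fd x = (exp (hh y - Q) - e1) / 2"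
  proof -
    have bb: "b0 x = 1/2" "b0 y = 1/2" using b0_lin assms by auto
    show ?thesis unfolding Fd_def bb e1_def by (simp add: algebra_simps)
  qed
  also have "\<dots> = e1 * (exp ((y - x) / 2) - 1) / 2" by (simp add: e2 algebra_simps)
  also have "\<dots> \<ge> e1 * ((y - x) / 2) / 2"
    using exp_ge_add_one_self[of "(y - x) / 2"] by (intro divide_right_mono mult_left_mono) (auto simp: e1_def field_simps)
  finally have A: "e1 * ((y - x) / 2) / 2 \<le> Fd y - Fd x" .
  have e1: "exp (- Q) \<le> e1" using hh_nonneg[of x] by (simp add: e1_def)
  have "mu * (y - x) \<le> exp (- Q) * ((y - x) / 4)"
  proof -
    have "1 / (2 * S\<^sup>2) \<le> 1/4" using SS by (simp add: field_simps)
    then have "exp (-Q) * (1 / (2 * S\<^sup>2)) \<le> exp (-Q) * (1/4)"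
      by (intro mult_left_mono) auto
    then have "exp (-Q) / (2 * S\<^sup>2) \<le> exp (-Q) / 4" by simp
    then have "mu \<le> exp (-Q) / 4" by (simp add: mu_def)
    then have "mu * (y - x) \<le> exp (-Q) / 4 * (y - x)" using assms by (intro mult_right_mono) auto
    then show ?thesis by simp
  qed
  also have "\<dots> \<le> e1 * ((y - x) / 4)" using e1 assms by (intro mult_right_mono) auto
  finally show ?thesis using A by simp
qed

lemma Fd_smono0:
  assumes "0 \<le> x" "x \<le> y"
  shows "mu * (y - x) \<le> Fd y - Fd x"
proof (cases "y \<le> S\<^sup>2")
  case True then show ?thesis using Fd_smono_a assms by auto
next
  case False
  show ?thesis
  proof (cases "x \<ge> S\<^sup>2")
    case True then show ?thesis using Fd_smono_b assms by auto
  next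
    case False
    have "mu * (S\<^sup>2 - x) \<le> Fd (S\<^sup>2) - Fd x" using Fd_smono_a assms False by auto
    moreover have "mu * (y - S\<^sup>2) \<le> Fd y - Fd (S\<^sup>2)" using Fd_smono_b \<open>\<not> y \<le> S\<^sup>2\<close> by auto
    ultimately show ?thesis by (simp add: algebra_simps)
  qed
qed

lemma Fd_smono:
  assumes "x \<le> y"
  shows "mu * (y - x) \<le> Fd y - Fd x"
proof (cases "0 \<le> x")
  case True then show ?thesis using Fd_smono0 assms by auto
next
  case False
  show ?thesis
  proof (cases "y \<le> 0")
    case True
    have "mu * ((-x) - (-y)) \<le> Fd (-x) - Fd (-y)" using Fd_smono0[of "-y" "-x"] True assms by auto
    then show ?thesis by (simp add: Fd_odd algebra_simps)
  next
    case False
    have "mu * ((-x) - 0) \<le> Fd (-x) - Fd 0" using Fd_smono0[of 0 "-x"] \<open>\<not> 0 \<le> x\<close> by auto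
    moreover have "mu * (y - 0) \<le> Fd y - Fd 0" using Fd_smono0[of 0 y] False by auto
    ultimately show ?thesis by (simp add: Fd_odd Fd_zero algebra_simps)
  qed
qed

end
context PQ begin
definition th :: "real \<Rightarrow> real" where "th r = (THE t. Fd t = r)"

lemma Fd_inj: "Fd x = Fd y \<Longrightarrow> x = y"
proof (rule ccontr)
  assume e: "Fd x = Fd y" and ne: "x \<noteq> y"
  show False
  proof (cases "x < y")
    case True
    then have "0 < mu * (y - x)" using mu_pos by simp
    moreover have "mu * (y - x) \<le> Fd y - Fd x" by (rule Fd_smono) (use True in simp)
    ultimately show False using e by simp
  next
    case False
    then have "y < x" using ne by auto
    then have "0 < mu * (x - y)" using mu_pos by simp
    moreover have "mu * (x - y) \<le> Fd x - Fd y" by (rule Fd_smono) (use \<open>y < x\<close> in simp)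
    ultimately show False using e by simp
  qed
qed

lemma Fd_surj0: "0 \<le> r \<Longrightarrow> \<exists>t. Fd t = r"
proof -
  assume r: "0 \<le> r"
  have "mu * (r / mu - 0) \<le> Fd (r / mu) - Fd 0" using Fd_smono0[of 0 "r / mu"] r mu_pos by auto
  then have "r \<le> Fd (r / mu)" using mu_pos by (simp add: Fd_zero)
  moreover have "Fd 0 \<le> r" using r by (simp add: Fd_zero)
  ultimately show ?thesis using IVT[of Fd 0 r "r / mu"] r mu_pos Fd_cont by auto
qed

lemma Fd_surj: "\<exists>t. Fd t = r"
proof (cases "0 \<le> r")
  case True then show ?thesis using Fd_surj0 by auto
next
  case False
  then obtain t where "Fd t = - r" using Fd_surj0[of "-r"] by auto
  then have "Fd (-t) = r" by (simp add: Fd_odd)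
  then show ?thesis by blast
qed

lemma Fd_th: "Fd (th r) = r"
proof -
  have "\<exists>!t. Fd t = r" using Fd_surj[of r] Fd_inj by blast
  then show ?thesis unfolding th_def by (rule theI')
qed

lemma th_Fd: "th (Fd t) = t" by (rule Fd_inj[OF Fd_th])

lemma th_zero: "th 0 = 0" using th_Fd[of 0] by (simp add: Fd_zero)

lemma th_smono: "r1 \<le> r2 \<Longrightarrow> th r1 \<le> th r2 \<and> mu * (th r2 - th r1) \<le> r2 - r1"
proof -
  assume r: "r1 \<le> r2"
  have "th r1 \<le> th r2"
  proof (rule ccontr)
    assume "\<not> th r1 \<le> th r2"
    then have "th r2 \<le> th r1" by simp
    from Fd_smono[OF this] have "mu * (th r1 - th r2) \<le> r1 - r2" by (simp only: Fd_th)
    moreover have "mu * (th r1 - th r2) > 0" using \<open>\<not> th r1 \<le> th r2\<close> mu_pos by simp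
    ultimately show False using r by simp
  qed
  moreover from Fd_smono[OF this] have "mu * (th r2 - th r1) \<le> r2 - r1" by (simp only: Fd_th)
  ultimately show ?thesis by simp
qed

lemma th_nonneg: "0 \<le> r \<Longrightarrow> 0 \<le> th r" using th_smono[of 0 r] th_zero by simp

lemma th_cont: "isCont th x"
proof -
  have "\<bar>th y - th x\<bar> \<le> \<bar>y - x\<bar> / mu" for y
  proof (cases "x \<le> y")
    case True
    then show ?thesis using th_smono[of x y] mu_pos by (simp add: field_simps)
  next
    case False
    then show ?thesis using th_smono[of y x] mu_pos by (simp add: field_simps)
  qed
  then have B: "mu * \<bar>th y - th x\<bar> \<le> \<bar>y - x\<bar>" for y using mu_pos by (simp add: field_simps)
  show ?thesis unfolding isCont_def LIM_eq
  proof (intro allI impI)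
    fix r :: real assume r: "0 < r"
    show "\<exists>s>0. \<forall>y. y \<noteq> x \<and> norm (y - x) < s \<longrightarrow> norm (th y - th x) < r"
    proof (rule exI[of _ "r * mu"], intro conjI allI impI)
      show "0 < r * mu" using r mu_pos by simp
      fix y assume "y \<noteq> x \<and> norm (y - x) < r * mu"
      then have "mu * \<bar>th y - th x\<bar> < mu * r" using B[of y] by (simp add: algebra_simps)
      then show "norm (th y - th x) < r" using mu_pos by simp
    qed
  qed
qed

end
context PQ begin
lemma F_strong: "F v + Fd v * (u - v) + mu / 2 * (u - v)\<^sup>2 \<le> F u"
proof -
  have d: "((\<lambda>x. F x - mu / 2 * x\<^sup>2) has_real_derivative (Fd x - mu * x)) (at x)" for x
  proof -
    have "((\<lambda>x. F x - mu / 2 * x\<^sup>2) has_real_derivative (Fd x - mu / 2 * (2 * x))) (at x)"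
      by (intro DERIV_diff F_deriv DERIV_cmult) (auto intro!: derivative_eq_intros)
    then show ?thesis by simp
  qed
  have mono: "Fd x - mu * x \<le> Fd y - mu * y" if "x \<le> y" for x y
    using Fd_smono[OF that] by (simp add: right_diff_distrib)
  have "(Fd v - mu * v) * (u - v) \<le> (F u - mu / 2 * u\<^sup>2) - (F v - mu / 2 * v\<^sup>2)"
    by (rule mvt_tangent[OF d]) (use mono in blast)
  moreover have "F u - (F v + Fd v * (u - v) + mu / 2 * (u - v)\<^sup>2)
     = ((F u - mu / 2 * u\<^sup>2) - (F v - mu / 2 * v\<^sup>2)) - (Fd v - mu * v) * (u - v)"
    by (simp add: power2_eq_square field_simps)
  ultimately show ?thesis by linarith
qed

definition G :: "real \<Rightarrow> real" where "G r = psi r S Q"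

lemma G_eq: "G r = th r * r - F (th r)"
proof -
  have "Sup (range (\<lambda>t. t * r - F t)) = th r * r - F (th r)"
  proof (rule cSup_eq_maximum)
    show "th r * r - F (th r) \<in> range (\<lambda>t. t * r - F t)" by blast
    fix z assume "z \<in> range (\<lambda>t. t * r - F t)"
    then obtain t where z: "z = t * r - F t" by blast
    have "F (th r) + r * (t - th r) + mu / 2 * (t - th r)\<^sup>2 \<le> F t"
      using F_strong[of "th r" t] by (simp add: Fd_th)
    moreover have "0 \<le> mu / 2 * (t - th r)\<^sup>2" using mu_pos by simp
    ultimately show "z \<le> th r * r - F (th r)" unfolding z by (simp add: algebra_simps)
  qed
  then show ?thesis by (simp add: G_def psi_def F_def)
qed

lemma G_ge: "t * r - F t \<le> G r"
proof -
  have "F (th r) + r * (t - th r) + mu / 2 * (t - th r)\<^sup>2 \<le> F t"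
    using F_strong[of "th r" t] by (simp add: Fd_th)
  moreover have "0 \<le> mu / 2 * (t - th r)\<^sup>2" using mu_pos by simp
  moreover have "r * (t - th r) = t * r - th r * r" by (simp add: algebra_simps)
  ultimately show ?thesis using G_eq[of r] by linarith
qed

lemma G_deriv: "(G has_real_derivative th x) (at x)"
proof (rule deriv_sandwich[OF _ _ th_cont])
  fix y
  have "(y - x) * th x = th x * y - th x * x" "(y - x) * th y = th y * y - th y * x"
    by (simp_all add: algebra_simps)
  then show "(y - x) * th x \<le> G y - G x" "G y - G x \<le> (y - x) * th y"
    using G_ge[of "th x" y] G_eq[of x] G_ge[of "th y" x] G_eq[of y] by linarith+
qed

lemma G_lo0: "0 \<le> G b - G a - th a * (b - a)"
  using G_ge[of "th a" b] G_eq[of a] by (simp add: algebra_simps)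

lemma G_up: "G b - G a - th a * (b - a) \<le> (b - a)\<^sup>2 / (2 * mu)"
proof -
  define D where "D = th b - th a"
  have f: "F (th a) + a * D + mu / 2 * D\<^sup>2 \<le> F (th b)"
    using F_strong[of "th a" "th b"] by (simp add: Fd_th D_def)
  have "G b - G a - th a * (b - a) = D * b - F (th b) + F (th a)"
    by (simp add: G_eq D_def algebra_simps)
  also have "\<dots> \<le> D * (b - a) - mu / 2 * D\<^sup>2" using f by (simp add: algebra_simps)
  also have "\<dots> \<le> (b - a)\<^sup>2 / (2 * mu)"
  proof -
    have "0 \<le> (b - a - mu * D)\<^sup>2 / (2 * mu)" using mu_pos by simp
    moreover have "(b - a - mu * D)\<^sup>2 / (2 * mu) = (b - a)\<^sup>2 / (2 * mu) - (D * (b - a) - mu / 2 * D\<^sup>2)"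
      using mu_pos by (simp add: power2_eq_square field_simps)
    ultimately show ?thesis by linarith
  qed
  finally show ?thesis .
qed

lemma th_le: "0 \<le> a \<Longrightarrow> th a \<le> a / mu"
  using th_smono[of 0 a] th_zero mu_pos by (simp add: field_simps)

lemma th_gap:
  assumes "0 \<le> x" "x \<le> y" "y \<le> R"
  shows "y - x \<le> 2 * max 1 R * (th y - th x)"
proof -
  have "Fd (th y) - Fd (th x) \<le> 2 * max 1 (Fd (th y)) * (th y - th x)"
    using Fd_lip[of "th x" "th y"] th_nonneg th_smono assms by auto
  also have "\<dots> \<le> 2 * max 1 R * (th y - th x)"
    using th_smono[of x y] assms by (intro mult_right_mono) (auto simp: Fd_th)
  finally show ?thesis by (simp add: Fd_th)
qed

lemma G_lo:
  assumes "0 \<le> a" "0 \<le> b" "a \<le> R" "b \<le> R"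
  shows "(b - a)\<^sup>2 / (4 * max 1 R) \<le> G b - G a - th a * (b - a)"
proof -
  define k where "k = 1 / (4 * max 1 R)"
  have kp: "0 < k" by (simp add: k_def)
  have d: "((\<lambda>x. G x - k * x\<^sup>2) has_real_derivative (th x - 2 * k * x)) (at x)" for x
  proof -
    have "((\<lambda>x. G x - k * x\<^sup>2) has_real_derivative (th x - k * (2 * x))) (at x)"
      by (intro DERIV_diff G_deriv DERIV_cmult) (auto intro!: derivative_eq_intros)
    then show ?thesis by (simp add: algebra_simps)
  qed
  have mono: "th x - 2 * k * x \<le> th y - 2 * k * y" if "min b a \<le> x" "x \<le> y" "y \<le> max b a" for x y
  proof -
    have "y - x \<le> 2 * max 1 R * (th y - th x)" using th_gap[of x y R] that assms by auto
    then have "2 * k * (y - x) \<le> th y - th x" by (simp add: k_def field_simps)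
    then show ?thesis by (simp add: algebra_simps)
  qed
  have "(th a - 2 * k * a) * (b - a) \<le> (G b - k * b\<^sup>2) - (G a - k * a\<^sup>2)"
    by (rule mvt_tangent[OF d mono])
  moreover have "(G b - k * b\<^sup>2) - (G a - k * a\<^sup>2) - (th a - 2 * k * a) * (b - a)
     = (G b - G a - th a * (b - a)) - k * (b - a)\<^sup>2"
    by (simp add: power2_eq_square algebra_simps)
  ultimately show ?thesis by (simp add: k_def)
qed

lemma th_ge:
  assumes "0 \<le> a" "a \<le> R"
  shows "a \<le> 2 * max 1 R * th a"
  using th_gap[of 0 a R] assms th_zero by simp

definition yy :: "'a::euclidean_space \<Rightarrow> 'a" where
  "yy v = (if v = 0 then 0 else (Fd (norm v) / norm v) *\<^sub>R v)"

lemma yy_norm: "norm (yy v) = Fd (norm v)"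
  using Fd_nonneg[of "norm v"] by (auto simp: yy_def Fd_zero)

lemma th_yy: "th (norm (yy v)) = norm v" by (simp add: yy_norm th_Fd)

lemma radial:
  fixes v z :: "'a::euclidean_space"
  defines "E \<equiv> G (norm z) - G (norm (yy v)) - inner v (z - yy v)"
  shows "0 \<le> E \<and> E \<le> (norm (z - yy v))\<^sup>2 / (2 * mu) \<and>
    (norm z \<le> R \<longrightarrow> norm (yy v) \<le> R \<longrightarrow> (norm (z - yy v))\<^sup>2 / (4 * max 1 R) \<le> E)"
proof -
  define a b n where "a = norm (yy v)" and "b = norm z" and "n = norm v"
  have a0: "0 \<le> a" "0 \<le> b" by (auto simp: a_def b_def)
  have tha: "th a = n" by (simp add: a_def n_def th_yy)
  define T where "T = G b - G a - th a * (b - a)"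
  have T: "0 \<le> T" "T \<le> (b - a)\<^sup>2 / (2 * mu)" unfolding T_def by (rule G_lo0, rule G_up)
  have TR: "norm z \<le> R \<Longrightarrow> norm (yy v) \<le> R \<Longrightarrow> (b - a)\<^sup>2 / (4 * max 1 R) \<le> T"
    unfolding T_def using G_lo[of a b R] a0 by (simp add: a_def b_def)
  show ?thesis
  proof (cases "v = 0")
    case v0: True
    then have y0: "yy v = 0" "a = 0" "n = 0" by (auto simp: yy_def a_def n_def)
    have E: "E = T" using y0 tha by (simp add: E_def T_def b_def v0)
    have "norm (z - yy v) = b - a" using y0 by (simp add: b_def)
    then show ?thesis using T TR E by auto
  next
    case v0: False
    define c where "c = Fd n / n"
    have np: "0 < n" using v0 by (simp add: n_def)
    have yv: "yy v = c *\<^sub>R v" using v0 by (simp add: yy_def c_def n_def)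
    have ac: "a = c * n" using np by (simp add: a_def yy_norm c_def n_def)
    have c0: "0 \<le> c" using np ac a0 by (simp add: c_def Fd_nonneg)
    define p where "p = inner v z"
    have pn: "p \<le> n * b" unfolding p_def n_def b_def by (rule norm_cauchy_schwarz)
    define w where "w = n * b - p"
    have w0: "0 \<le> w" using pn by (simp add: w_def)
    have i1: "inner v (z - yy v) = p - c * n\<^sup>2"
      by (simp add: yv inner_diff_right p_def n_def power2_norm_eq_inner)
    have "E = G b - G a - (p - c * n\<^sup>2)" using i1 by (simp add: E_def a_def b_def)
    then have E: "E = T + w" unfolding T_def w_def tha by (simp add: ac power2_eq_square algebra_simps)
    have "(norm (z - yy v))\<^sup>2 = inner (z - yy v) (z - yy v)" by (simp only: power2_norm_eq_inner)
    also have "\<dots> = inner z z - 2 * c * p + c\<^sup>2 * inner v v"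
      by (simp add: yv inner_diff_left inner_diff_right inner_commute[of z v] p_def power2_eq_square algebra_simps)
    finally have "(norm (z - yy v))\<^sup>2 = b\<^sup>2 - 2 * c * p + c\<^sup>2 * n\<^sup>2"
      by (simp add: power2_norm_eq_inner b_def n_def)
    then have D: "(norm (z - yy v))\<^sup>2 = (b - a)\<^sup>2 + 2 * c * w"
      by (simp add: ac w_def power2_eq_square algebra_simps)
    have cmu: "mu \<le> c"
    proof -
      have "n \<le> a / mu" using th_le[of a] a0 tha by simp
      then have "mu * n \<le> c * n" using mu_pos by (simp add: ac field_simps)
      then show ?thesis using np by simp
    qed
    have up: "E \<le> (norm (z - yy v))\<^sup>2 / (2 * mu)"
    proof -
      have "w \<le> 2 * c * w / (2 * mu)"
      proof -
        have "mu * w \<le> c * w" using cmu w0 by (intro mult_right_mono) auto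
        then show ?thesis using mu_pos by (simp add: field_simps)
      qed
      then have "T + w \<le> (b - a)\<^sup>2 / (2 * mu) + 2 * c * w / (2 * mu)" using T by linarith
      then show ?thesis unfolding E D by (simp add: add_divide_distrib)
    qed
    have lo: "(norm (z - yy v))\<^sup>2 / (4 * max 1 R) \<le> E"
      if R: "norm z \<le> R" "norm (yy v) \<le> R"
    proof -
      have "a \<le> 2 * max 1 R * n" using th_ge[of a R] a0 R tha by (simp add: a_def)
      then have "c * n \<le> 2 * max 1 R * n" by (simp add: ac)
      then have c2: "c \<le> 2 * max 1 R" using np by simp
      have "2 * c * w / (4 * max 1 R) \<le> w"
      proof -
        have "c * w \<le> (2 * max 1 R) * w" using c2 w0 by (intro mult_right_mono) auto
        then show ?thesis by (simp add: field_simps)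
      qed
      moreover have "(b - a)\<^sup>2 / (4 * max 1 R) \<le> T" using TR R by auto
      ultimately show ?thesis unfolding E D by (simp add: add_divide_distrib)
    qed
    show ?thesis using T E w0 up lo by auto
  qed
qed

end
context PQ begin

lemma main_x:
  fixes v :: "'a::euclidean_space"
  shows "(THE x. \<forall>y. G (norm x) - inner v x \<le> G (norm y) - inner v y) = yy v"
proof (rule the_equality)
  show "\<forall>y. G (norm (yy v)) - inner v (yy v) \<le> G (norm y) - inner v y"
  proof
    fix y
    have "0 \<le> G (norm y) - G (norm (yy v)) - inner v (y - yy v)" using radial[of y v] by blast
    then show "G (norm (yy v)) - inner v (yy v) \<le> G (norm y) - inner v y"
      by (simp add: inner_diff_right)
  qed
next
  fix x assume P: "\<forall>y. G (norm x) - inner v x \<le> G (norm y) - inner v y"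
  define R where "R = max (norm x) (norm (yy v))"
  have "(norm (x - yy v))\<^sup>2 / (4 * max 1 R) \<le> G (norm x) - G (norm (yy v)) - inner v (x - yy v)"
    using radial[of x v R] by (simp add: R_def)
  moreover have "G (norm x) - G (norm (yy v)) - inner v (x - yy v) \<le> 0"
    using P[rule_format, of "yy v"] by (simp add: inner_diff_right)
  ultimately have "(norm (x - yy v))\<^sup>2 / (4 * max 1 R) \<le> 0" by linarith
  moreover have "0 < 4 * max 1 R" by simp
  ultimately have "(norm (x - yy v))\<^sup>2 \<le> 0" by (simp add: divide_le_0_iff)
  then show "x = yy v" by simp
qed

lemma main_deriv:
  fixes v :: "'a::euclidean_space"
  shows "((\<lambda>x. G (norm x)) has_derivative (\<lambda>h. inner v h)) (at (yy v))"
  unfolding has_derivative_at_alt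
proof (intro conjI allI impI)
  show "bounded_linear (inner v)" by (rule bounded_linear_inner_right)
  fix e :: real assume e: "0 < e"
  show "\<exists>d>0. \<forall>y. norm (y - yy v) < d \<longrightarrow>
      norm (G (norm y) - G (norm (yy v)) - inner v (y - yy v)) \<le> e * norm (y - yy v)"
  proof (rule exI[of _ "2 * mu * e"], intro conjI allI impI)
    show "0 < 2 * mu * e" using e mu_pos by simp
    fix y assume y: "norm (y - yy v) < 2 * mu * e"
    define E where "E = G (norm y) - G (norm (yy v)) - inner v (y - yy v)"
    have E: "0 \<le> E" "E \<le> (norm (y - yy v))\<^sup>2 / (2 * mu)" using radial[of y v] by (auto simp: E_def)
    have "(norm (y - yy v))\<^sup>2 / (2 * mu) = norm (y - yy v) * (norm (y - yy v) / (2 * mu))"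
      by (simp add: power2_eq_square)
    also have "\<dots> \<le> norm (y - yy v) * e"
      using y mu_pos by (intro mult_left_mono) (auto simp: field_simps)
    finally show "norm E \<le> e * norm (y - yy v)" using E by (simp add: mult.commute)
  qed
qed

end

lemma Ssq_ge: "4 \<le> alg_Ssq \<eta> g t"
  by (induction t) (simp_all add: add_increasing2)

lemma Q_ge: "0 \<le> alg_Q \<eta> g t"
proof (induction t)
  case 0 then show ?case by simp
next
  case (Suc t)
  have "0 \<le> (norm (\<eta> (Suc t) *\<^sub>R g (Suc t)))\<^sup>2 / alg_Ssq \<eta> g (Suc t)"
    using Ssq_ge[of \<eta> g "Suc t"] by simp
  then show ?case using Suc by simp
qed

theorem lemma19:
  fixes \<eta> :: "nat \<Rightarrow> real" and g :: "nat \<Rightarrow> 'a::euclidean_space"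
    and t :: nat and xs :: 'a
  assumes eta_nonneg: "\<And>s. \<eta> s \<ge> 0"
    and t_pos: "t \<ge> 1"
  shows "alg_phi \<eta> g t differentiable (at (alg_x \<eta> g t)) \<and>
    (\<exists>xt. min (norm xs) (norm (alg_x \<eta> g t)) \<le> xt \<and> xt \<le> max (norm xs) (norm (alg_x \<eta> g t)) \<and>
      (norm (xs - alg_x \<eta> g t))\<^sup>2 / (alg_S \<eta> g (t - 1) + 2) * min_one_inv xt
        \<le> bregman (alg_phi \<eta> g t) xs (alg_x \<eta> g t) \<and>
      bregman (alg_phi \<eta> g t) xs (alg_x \<eta> g t)
        \<le> 2 * (norm (xs - alg_x \<eta> g t))\<^sup>2 * ((alg_S \<eta> g (t - 1))\<^sup>2 + alg_Q \<eta> g (t - 1))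
            * exp (alg_Q \<eta> g (t - 1)))"
proof -
  define S Q where "S = alg_S \<eta> g (t - 1)" and "Q = alg_Q \<eta> g (t - 1)"
  define v where "v = alg_theta \<eta> g (t - 1)"
  have S2: "2 \<le> S"
  proof -
    have "sqrt 4 \<le> sqrt (alg_Ssq \<eta> g (t - 1))" using Ssq_ge by (subst real_sqrt_le_iff) auto
    moreover have "sqrt 4 = (2::real)" by (simp add: real_sqrt_eq_iff)
    ultimately show ?thesis by (simp add: S_def alg_S_def)
  qed
  have Q0: "0 \<le> Q" using Q_ge by (simp add: Q_def)
  interpret P: PQ S Q using S2 Q0 by unfold_locales
  have phi: "alg_phi \<eta> g t = (\<lambda>x. P.G (norm x))"
  proof (rule ext)
    fix x
    show "alg_phi \<eta> g t x = P.G (norm x)" using P.G_def[of "norm x"] by (simp add: alg_phi_def S_def Q_def)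
  qed
  have xt: "alg_x \<eta> g t = P.yy v"
    using t_pos P.main_x[of v] by (simp add: alg_x_def phi v_def)
  have der: "(alg_phi \<eta> g t has_derivative (\<lambda>h. inner v h)) (at (alg_x \<eta> g t))"
    unfolding phi xt by (rule P.main_deriv)
  have fd: "frechet_derivative (alg_phi \<eta> g t) (at (alg_x \<eta> g t)) = (\<lambda>h. inner v h)"
    using frechet_derivative_at[OF der] by simp
  define y where "y = alg_x \<eta> g t"
  define R where "R = max (norm xs) (norm y)"
  define B where "B = bregman (alg_phi \<eta> g t) xs y"
  have B: "B = P.G (norm xs) - P.G (norm (P.yy v)) - inner v (xs - P.yy v)"
    unfolding B_def bregman_def y_def fd by (simp add: phi xt)
  have rad: "0 \<le> B" "B \<le> (norm (xs - y))\<^sup>2 / (2 * P.mu)"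
    "(norm (xs - y))\<^sup>2 / (4 * max 1 R) \<le> B"
    using P.radial[of xs v R] by (auto simp: B y_def xt R_def)
  have up: "B \<le> 2 * (norm (xs - y))\<^sup>2 * (S\<^sup>2 + Q) * exp Q"
  proof -
    have "(norm (xs - y))\<^sup>2 / (2 * P.mu) = (norm (xs - y))\<^sup>2 * (S\<^sup>2 * exp Q)"
      using P.SS by (simp add: P.mu_def exp_minus field_simps)
    also have "\<dots> \<le> (norm (xs - y))\<^sup>2 * (2 * (S\<^sup>2 + Q) * exp Q)"
      using Q0 by (intro mult_left_mono mult_right_mono) auto
    finally show ?thesis using rad by (simp add: algebra_simps)
  qed
  have lo: "(norm (xs - y))\<^sup>2 / (S + 2) * min_one_inv R \<le> B"
  proof -
    have R0: "0 \<le> R" unfolding R_def by (rule order.trans[OF norm_ge_zero max.cobounded1])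
    have m: "min_one_inv R = 1 / max 1 R"
      using R0 by (auto simp: min_one_inv_def min_def max_def)
    have "(norm (xs - y))\<^sup>2 / (S + 2) * min_one_inv R = (norm (xs - y))\<^sup>2 / ((S + 2) * max 1 R)"
      by (simp add: m)
    also have "\<dots> \<le> (norm (xs - y))\<^sup>2 / (4 * max 1 R)"
      using S2 by (intro divide_left_mono mult_right_mono) auto
    finally show ?thesis using rad by linarith
  qed
  have dif: "alg_phi \<eta> g t differentiable (at (alg_x \<eta> g t))"
    using der by (auto simp: differentiable_def)
  show ?thesis
    using dif up lo
    by (auto simp: B_def y_def R_def S_def Q_def intro!: exI[of _ "max (norm xs) (norm (alg_x \<eta> g t))"])
qed

end
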